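(* There exists a $2$-isometry $T\in B(\ell^2)$ such that for every $\lambda\in(0,1)$ and every $m\ge2$, the $\lambda$-Aluthge transform $\Delta_\lambda(T)$ is not an $m$-isometry. (For instance, the weighted shift with weights $a_j=\sqrt{(j+1)/j}$, $j\ge1$.)
   Context: $\ell^2$ has canonical basis $(e_j)_{j\ge1}$; the weighted shift associated to a bounded complex sequence $(a_j)_{j\ge1}$ is the operator $T\in B(\ell^2)$ with $Te_j=a_je_{j+1}$. For $T\in B(H)$ with polar decomposition $T=V|T|$ ($|T|=(T^*T)^{1/2}$, $V$ the partial isometry with $\ker V=\ker T$) and $\lambda\in[0,1]$, the $\lambda$-Aluthge transform is $\Delta_\lambda(T)=|T|^\lambda V|T|^{1-\lambda}$. For $m\ge1$, $T$ is an $m$-isometry if $\sum_{k=0}^m(-1)^k\binom{m}{k}\|T^kx\|^2=0$ for all $x\in H$. *)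

theory Defs
  imports "HOL-Analysis.Analysis" "HOL-Computational_Algebra.Polynomial"
begin

text \<open>The complex Hilbert space ell^2 = ell^2(N), N = {0,1,2,...}, realised as the set of
  square-summable sequences nat => complex (index j >= 1 of the paper corresponds to j - 1).\<close>

type_synonym seq = "nat \<Rightarrow> complex"
type_synonym op = "seq \<Rightarrow> seq"

definition L2 :: "seq set" where
  "L2 = {x. summable (\<lambda>n. (cmod (x n))\<^sup>2)}"

definition l2norm :: "seq \<Rightarrow> real" where
  "l2norm x = sqrt (\<Sum>n. (cmod (x n))\<^sup>2)"

definition l2inner :: "seq \<Rightarrow> seq \<Rightarrow> complex" where
  "l2inner x y = (\<Sum>n. x n * cnj (y n))"

text \<open>Bounded linear operators on ell^2 (B(ell^2)); normalised to be 0 outside L2 so that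
  an operator is determined by its action on ell^2.\<close>
definition is_bop :: "op \<Rightarrow> bool" where
  "is_bop T \<longleftrightarrow>
     (\<forall>x. x \<notin> L2 \<longrightarrow> T x = (\<lambda>n. 0)) \<and>
     (\<forall>x\<in>L2. T x \<in> L2) \<and>
     (\<forall>x\<in>L2. \<forall>y\<in>L2. \<forall>a b. T (\<lambda>n. a * x n + b * y n) = (\<lambda>n. a * T x n + b * T y n)) \<and>
     (\<exists>C. \<forall>x\<in>L2. l2norm (T x) \<le> C * l2norm x)"

definition op_norm :: "op \<Rightarrow> real" where
  "op_norm A = Sup ((\<lambda>x. l2norm (A x)) ` {x \<in> L2. l2norm x \<le> 1})"

definition adj :: "op \<Rightarrow> op" where
  "adj T = (THE S. is_bop S \<and> (\<forall>x\<in>L2. \<forall>y\<in>L2. l2inner (T x) y = l2inner x (S y)))"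

definition poly_op :: "real poly \<Rightarrow> op \<Rightarrow> op" where
  "poly_op p A = (\<lambda>x n. (\<Sum>i\<le>degree p. complex_of_real (coeff p i) * (A ^^ i) x n))"

text \<open>Continuous functional calculus for the power t powr r of a positive operator A
  (spectrum contained in [0, norm A]): A^r is the norm limit of p_k(A) for every sequence of
  real polynomials p_k converging uniformly to t powr r on [0, norm A].\<close>
definition op_pow :: "real \<Rightarrow> op \<Rightarrow> op" where
  "op_pow r A = (THE B. is_bop B \<and>
     (\<forall>p :: nat \<Rightarrow> real poly.
        uniform_limit {0..op_norm A} (\<lambda>k t. poly (p k) t) (\<lambda>t. t powr r) sequentially \<longrightarrow>
        (\<lambda>k. op_norm (\<lambda>x n. poly_op (p k) A x n - B x n)) \<longlonglongrightarrow> 0))"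

definition abs_op :: "op \<Rightarrow> op" where
  "abs_op T = op_pow (1/2) (adj T \<circ> T)"

definition polar_V :: "op \<Rightarrow> op" where
  "polar_V T = (THE V. is_bop V \<and> (\<forall>x\<in>L2. V (abs_op T x) = T x) \<and>
                        (\<forall>x\<in>L2. T x = (\<lambda>n. 0) \<longrightarrow> V x = (\<lambda>n. 0)))"

definition aluthge :: "real \<Rightarrow> op \<Rightarrow> op" where
  "aluthge l T = op_pow l (abs_op T) \<circ> polar_V T \<circ> op_pow (1 - l) (abs_op T)"

definition m_isometry :: "nat \<Rightarrow> op \<Rightarrow> bool" where
  "m_isometry m T \<longleftrightarrow>
     (\<forall>x\<in>L2. (\<Sum>k\<le>m. (-1) ^ k * real (m choose k) * (l2norm ((T ^^ k) x))\<^sup>2) = 0)"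

end

theory Submission imports Defs begin

lemma L2_zero[simp]: "(\<lambda>n. 0) \<in> L2" by (simp add: L2_def)

lemma sq_sum_le: "(cmod (u + v))\<^sup>2 \<le> 2 * (cmod u)\<^sup>2 + 2 * (cmod v)\<^sup>2"
proof -
  have "cmod (u+v) \<le> cmod u + cmod v" by (rule norm_triangle_ineq)
  hence "(cmod (u+v))\<^sup>2 \<le> (cmod u + cmod v)\<^sup>2" by (simp add: power_mono)
  also have "\<dots> \<le> 2 * (cmod u)\<^sup>2 + 2 * (cmod v)\<^sup>2"
    using zero_le_power2[of "cmod u - cmod v"] unfolding power2_sum power2_diff by linarith
  finally show ?thesis .
qed

lemma L2_lin: assumes "x \<in> L2" "y \<in> L2" shows "(\<lambda>n. a * x n + b * y n) \<in> L2"
proof -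
  have sx: "summable (\<lambda>n. (cmod (x n))\<^sup>2)" and sy: "summable (\<lambda>n. (cmod (y n))\<^sup>2)"
    using assms by (auto simp: L2_def)
  have sg: "summable (\<lambda>n. 2 * (cmod a)\<^sup>2 * (cmod (x n))\<^sup>2 + 2 * (cmod b)\<^sup>2 * (cmod (y n))\<^sup>2)"
    by (intro summable_add summable_mult sx sy)
  have le: "norm ((cmod (a * x n + b * y n))\<^sup>2) \<le> 2 * (cmod a)\<^sup>2 * (cmod (x n))\<^sup>2 + 2 * (cmod b)\<^sup>2 * (cmod (y n))\<^sup>2" for n
  proof -
    have "norm ((cmod (a * x n + b * y n))\<^sup>2) = (cmod (a * x n + b * y n))\<^sup>2" by simp
    also have "\<dots> \<le> 2 * (cmod (a * x n))\<^sup>2 + 2 * (cmod (b * y n))\<^sup>2" by (rule sq_sum_le)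
    also have "\<dots> = 2 * (cmod a)\<^sup>2 * (cmod (x n))\<^sup>2 + 2 * (cmod b)\<^sup>2 * (cmod (y n))\<^sup>2"
      by (simp only: norm_mult power_mult_distrib mult.assoc)
    finally show ?thesis .
  qed
  have "summable (\<lambda>n. (cmod (a * x n + b * y n))\<^sup>2)"
    by (rule summable_comparison_test'[OF sg le])
  thus ?thesis unfolding L2_def by simp
qed

lemma L2_mult: assumes "x \<in> L2" "\<And>n. cmod (c n) \<le> C" shows "(\<lambda>n. c n * x n) \<in> L2"
proof -
  have sx: "summable (\<lambda>n. (cmod (x n))\<^sup>2)" using assms by (auto simp: L2_def)
  have "norm ((cmod (c n * x n))\<^sup>2) \<le> C\<^sup>2 * (cmod (x n))\<^sup>2" for n
  proof -
    have "(cmod (c n))\<^sup>2 \<le> C\<^sup>2" using assms(2)[of n] by (intro power_mono) auto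
    hence "(cmod (c n))\<^sup>2 * (cmod (x n))\<^sup>2 \<le> C\<^sup>2 * (cmod (x n))\<^sup>2" by (rule mult_right_mono) simp
    thus ?thesis by (simp add: norm_mult power_mult_distrib)
  qed
  hence "summable (\<lambda>n. (cmod (c n * x n))\<^sup>2)"
    by (rule summable_comparison_test'[OF summable_mult[OF sx]])
  thus ?thesis unfolding L2_def by simp
qed

lemma l2norm_mult: assumes "x \<in> L2" "\<And>n. cmod (c n) \<le> C" shows "l2norm (\<lambda>n. c n * x n) \<le> C * l2norm x"
proof -
  have C: "C \<ge> 0" using assms(2)[of 0] norm_ge_zero order.trans by blast
  have sx: "summable (\<lambda>n. (cmod (x n))\<^sup>2)" using assms by (auto simp: L2_def)
  have le: "(cmod (c n * x n))\<^sup>2 \<le> C\<^sup>2 * (cmod (x n))\<^sup>2" for n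
  proof -
    have "(cmod (c n))\<^sup>2 \<le> C\<^sup>2" using assms(2)[of n] by (intro power_mono) auto
    hence "(cmod (c n))\<^sup>2 * (cmod (x n))\<^sup>2 \<le> C\<^sup>2 * (cmod (x n))\<^sup>2" by (rule mult_right_mono) simp
    thus ?thesis by (simp add: norm_mult power_mult_distrib)
  qed
  have s2: "summable (\<lambda>n. (cmod (c n * x n))\<^sup>2)" using L2_mult[OF assms] by (simp add: L2_def)
  have "(\<Sum>n. (cmod (c n * x n))\<^sup>2) \<le> (\<Sum>n. C\<^sup>2 * (cmod (x n))\<^sup>2)"
    by (rule suminf_le[OF le s2]) (use sx in \<open>rule summable_mult\<close>)
  also have "\<dots> = C\<^sup>2 * (\<Sum>n. (cmod (x n))\<^sup>2)" using sx by (rule suminf_mult)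
  finally have "sqrt (\<Sum>n. (cmod (c n * x n))\<^sup>2) \<le> sqrt (C\<^sup>2 * (\<Sum>n. (cmod (x n))\<^sup>2))" by simp
  thus ?thesis using C by (simp add: l2norm_def real_sqrt_mult)
qed

lemma L2_shiftR: assumes "x \<in> L2" shows "(\<lambda>n. case n of 0 \<Rightarrow> 0 | Suc k \<Rightarrow> x k) \<in> L2"
proof -
  have "summable (\<lambda>n. (cmod (x n))\<^sup>2)" using assms by (auto simp: L2_def)
  hence "summable (\<lambda>n. (cmod ((\<lambda>n. case n of 0 \<Rightarrow> 0 | Suc k \<Rightarrow> x k) (Suc n)))\<^sup>2)" by simp
  from summable_Suc_iff[THEN iffD1, OF this] show ?thesis unfolding L2_def by simp
qed

lemma l2norm_shiftR: assumes "x \<in> L2" shows "l2norm (\<lambda>n. case n of 0 \<Rightarrow> 0 | Suc k \<Rightarrow> x k) = l2norm x"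
proof -
  have "summable (\<lambda>n. (cmod ((\<lambda>n. case n of 0 \<Rightarrow> (0::complex) | Suc k \<Rightarrow> x k) n))\<^sup>2)"
    using L2_shiftR[OF assms] by (simp add: L2_def)
  from suminf_split_head[OF this] show ?thesis by (simp add: l2norm_def)
qed

lemma L2_shiftL: assumes "x \<in> L2" shows "(\<lambda>n. x (Suc n)) \<in> L2"
proof -
  have "summable (\<lambda>n. (cmod (x n))\<^sup>2)" using assms by (simp add: L2_def)
  from summable_Suc_iff[THEN iffD2, OF this] show ?thesis unfolding L2_def by simp
qed



definition diag :: "(nat \<Rightarrow> real) \<Rightarrow> op" where
  "diag d = (\<lambda>x. if x \<in> L2 then (\<lambda>n. complex_of_real (d n) * x n) else (\<lambda>n. 0))"

definition wsh :: "(nat \<Rightarrow> real) \<Rightarrow> op" where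
  "wsh w = (\<lambda>x. if x \<in> L2 then (\<lambda>n. case n of 0 \<Rightarrow> 0 | Suc k \<Rightarrow> complex_of_real (w k) * x k) else (\<lambda>n. 0))"

lemma diag_L2: assumes "x \<in> L2" "\<And>n. \<bar>d n\<bar> \<le> C" shows "diag d x \<in> L2"
  using L2_mult[of x "\<lambda>n. complex_of_real (d n)" C] assms by (simp add: diag_def)

lemma is_bop_diag: assumes "\<And>n. \<bar>d n\<bar> \<le> C" shows "is_bop (diag d)"
  unfolding is_bop_def
proof (intro conjI ballI allI impI)
  fix x assume "x \<notin> L2" thus "diag d x = (\<lambda>n. 0)" by (simp add: diag_def)
next
  fix x assume "x \<in> L2" thus "diag d x \<in> L2" using diag_L2 assms by blast
next
  fix x y a b assume xy: "x \<in> L2" "y \<in> L2"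
  hence "(\<lambda>n. a * x n + b * y n) \<in> L2" by (rule L2_lin)
  thus "diag d (\<lambda>n. a * x n + b * y n) = (\<lambda>n. a * diag d x n + b * diag d y n)"
    using xy by (simp add: diag_def algebra_simps)
next
  show "\<exists>C. \<forall>x\<in>L2. l2norm (diag d x) \<le> C * l2norm x"
    using l2norm_mult[of _ "\<lambda>n. complex_of_real (d n)" C] assms by (auto simp: diag_def)
qed

lemma wsh_alt: "x \<in> L2 \<Longrightarrow> wsh w x = (\<lambda>n. case n of 0 \<Rightarrow> 0 | Suc k \<Rightarrow> (\<lambda>k. complex_of_real (w k) * x k) k)"
  by (simp add: wsh_def)

lemma wsh_L2: assumes "x \<in> L2" "\<And>n. \<bar>w n\<bar> \<le> C" shows "wsh w x \<in> L2"
  unfolding wsh_alt[OF assms(1)]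
  by (rule L2_shiftR, rule L2_mult[of x _ C]) (use assms in auto)

lemma is_bop_wsh: assumes "\<And>n. \<bar>w n\<bar> \<le> C" shows "is_bop (wsh w)"
  unfolding is_bop_def
proof (intro conjI ballI allI impI)
  fix x assume "x \<notin> L2" thus "wsh w x = (\<lambda>n. 0)" by (simp add: wsh_def)
next
  fix x assume "x \<in> L2" thus "wsh w x \<in> L2" using wsh_L2 assms by blast
next
  fix x y a b assume xy: "x \<in> L2" "y \<in> L2"
  hence "(\<lambda>n. a * x n + b * y n) \<in> L2" by (rule L2_lin)
  thus "wsh w (\<lambda>n. a * x n + b * y n) = (\<lambda>n. a * wsh w x n + b * wsh w y n)"
    using xy by (auto simp: wsh_def algebra_simps split: nat.split)
next
  have "l2norm (wsh w x) \<le> C * l2norm x" if "x \<in> L2" for x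
  proof -
    have "l2norm (wsh w x) = l2norm (\<lambda>k. complex_of_real (w k) * x k)"
      unfolding wsh_alt[OF that] by (rule l2norm_shiftR, rule L2_mult[of x _ C]) (use assms that in auto)
    also have "\<dots> \<le> C * l2norm x" by (rule l2norm_mult) (use assms that in auto)
    finally show ?thesis .
  qed
  thus "\<exists>C. \<forall>x\<in>L2. l2norm (wsh w x) \<le> C * l2norm x" by blast
qed


lemma wsh_0[simp]: "wsh w y 0 = 0" by (simp add: wsh_def)
lemma wsh_Suc: "y \<in> L2 \<Longrightarrow> wsh w y (Suc m) = complex_of_real (w m) * y m" by (simp add: wsh_def)

lemma funpow_L2: assumes "is_bop T" "x \<in> L2" shows "(T ^^ k) x \<in> L2"
  using assms by (induction k) (auto simp: is_bop_def)

lemma wsh_pow: assumes "x \<in> L2" "\<And>n. \<bar>w n\<bar> \<le> C"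
  shows "(wsh w ^^ k) x = (\<lambda>n. if k \<le> n then complex_of_real (\<Prod>i\<in>{n-k..<n}. w i) * x (n-k) else 0)"
proof (induction k)
  case 0 show ?case by simp
next
  case (Suc k)
  have L: "(wsh w ^^ k) x \<in> L2" by (rule funpow_L2[OF is_bop_wsh[OF assms(2)] assms(1)])
  show ?case
  proof
    fix n
    show "(wsh w ^^ Suc k) x n = (if Suc k \<le> n then complex_of_real (\<Prod>i\<in>{n - Suc k..<n}. w i) * x (n - Suc k) else 0)"
    proof (cases n)
      case 0 thus ?thesis by simp
    next
      case (Suc m)
      have P: "k \<le> m \<Longrightarrow> (\<Prod>i\<in>{m-k..<Suc m}. w i) = w m * (\<Prod>i\<in>{m-k..<m}. w i)"
        by (subst prod.atLeastLessThan_Suc) auto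
      have "(wsh w ^^ Suc k) x n = complex_of_real (w m) * (wsh w ^^ k) x m"
        using L Suc by (simp add: wsh_Suc)
      thus ?thesis using Suc by (auto simp: Suc.IH P)
    qed
  qed
qed

lemma wsh_pow_norm: assumes "x \<in> L2" "\<And>n. \<bar>w n\<bar> \<le> C"
  shows "(\<lambda>j. (\<Prod>i\<in>{j..<j+k}. w i)\<^sup>2 * (cmod (x j))\<^sup>2) sums (l2norm ((wsh w ^^ k) x))\<^sup>2"
proof -
  define g where "g = (\<lambda>n. (cmod ((wsh w ^^ k) x n))\<^sup>2)"
  have bop: "is_bop (wsh w)" using is_bop_wsh assms(2) by blast
  have "summable g" using funpow_L2[OF bop assms(1), where k=k] by (simp add: L2_def g_def)
  hence gs: "g sums (suminf g)" by (rule summable_sums)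
  have g0: "(\<Sum>i<k. g i) = 0" by (simp add: g_def wsh_pow[OF assms])
  have "(\<lambda>i. g (i + k)) sums (suminf g)" using sums_iff_shift[of g k "suminf g"] gs g0 by simp
  moreover have "g (j + k) = (\<Prod>i\<in>{j..<j+k}. w i)\<^sup>2 * (cmod (x j))\<^sup>2" for j
    by (simp add: g_def wsh_pow[OF assms] norm_mult power_mult_distrib del: of_real_prod)
  moreover have "suminf g = (l2norm ((wsh w ^^ k) x))\<^sup>2"
    unfolding l2norm_def g_def[symmetric] using suminf_nonneg[OF \<open>summable g\<close>] by (simp add: g_def)
  ultimately show ?thesis by simp
qed


definition aw :: "nat \<Rightarrow> real" where "aw n = sqrt ((real n + 2) / (real n + 1))"

lemma aw_pos: "aw n > 0" by (simp add: aw_def)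
lemma aw_ge1: "aw n \<ge> 1" by (simp add: aw_def)
lemma aw_bound: "\<bar>aw n\<bar> \<le> 2"
proof -
  have "(real n + 2) / (real n + 1) \<le> 4" by (simp add: divide_simps)
  hence "aw n \<le> sqrt 4" unfolding aw_def by (rule real_sqrt_le_mono)
  thus ?thesis using aw_pos[of n] by simp
qed

lemma aw_sq: "(aw n)\<^sup>2 = (real n + 2) / (real n + 1)" by (simp add: aw_def)

lemma tele: "(\<Prod>i\<in>{j..<j+k}. (real i + 2) / (real i + 1)) = (real j + real k + 1) / (real j + 1)"
proof (induction k)
  case 0 thus ?case by simp
next
  case (Suc k)
  have "(\<Prod>i\<in>{j..<j+Suc k}. (real i + 2) / (real i + 1)) = (\<Prod>i\<in>{j..<j+k}. (real i + 2) / (real i + 1)) * ((real (j+k) + 2) / (real (j+k) + 1))"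
    by (simp add: prod.atLeastLessThan_Suc)
  also have "\<dots> = (real j + real (Suc k) + 1) / (real j + 1)"
  proof -
    have p: "real j + real k + 1 > 0" "real j + 1 > 0" by auto
    have g: "A \<noteq> 0 \<Longrightarrow> (A/B) * (C/A) = (C/B::real)" for A B C by (simp add: field_simps)
    show ?thesis unfolding Suc.IH using g[of "real j + real k + 1" "real j + 1" "real j + real k + 2"] p
      by (simp add: algebra_simps)
  qed
  finally show ?case .
qed

lemma aw_prod_sq: "(\<Prod>i\<in>{j..<j+k}. aw i)\<^sup>2 = (real j + real k + 1) / (real j + 1)"
  by (simp add: prod_power_distrib aw_sq tele)

lemma T_2iso: "m_isometry 2 (wsh aw)"
  unfolding m_isometry_def
proof
  fix x assume x: "x \<in> L2"
  define S where "S k = (l2norm ((wsh aw ^^ k) x))\<^sup>2" for k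
  define c where "c j = (cmod (x j))\<^sup>2" for j
  have s: "(\<lambda>j. (real j + 1 + real k) / (real j + 1) * c j) sums S k" for k
    using wsh_pow_norm[where w=aw and C=2 and k=k, OF x aw_bound] by (simp add: aw_prod_sq S_def c_def add_ac)
  have comb: "(\<lambda>j. (real j + 1 + real (0::nat)) / (real j + 1) * c j - 2 * ((real j + 1 + real (1::nat)) / (real j + 1) * c j)
        + (real j + 1 + real (2::nat)) / (real j + 1) * c j) sums (S 0 - 2 * S 1 + S 2)"
    by (intro sums_add sums_diff sums_mult s)
  have z: "d > 0 \<Longrightarrow> (d + 0)/d*e - 2*((d+1)/d*e) + (d+2)/d*e = (0::real)" for d e
    by (simp add: field_simps)
  have "(\<lambda>j. (real j + 1 + real (0::nat)) / (real j + 1) * c j - 2 * ((real j + 1 + real (1::nat)) / (real j + 1) * c j)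
        + (real j + 1 + real (2::nat)) / (real j + 1) * c j) = (\<lambda>j. 0)"
  proof
    fix j
    show "(real j + 1 + real (0::nat)) / (real j + 1) * c j - 2 * ((real j + 1 + real (1::nat)) / (real j + 1) * c j)
        + (real j + 1 + real (2::nat)) / (real j + 1) * c j = 0"
      unfolding of_nat_0 of_nat_1 of_nat_numeral by (rule z) simp
  qed
  with comb have "(\<lambda>j. 0) sums (S 0 - 2 * S 1 + S 2)" by simp
  hence "S 0 - 2 * S 1 + S 2 = 0" using sums_unique2 sums_zero by blast
  moreover have "(\<Sum>k\<le>2. (-1) ^ k * real (2 choose k) * S k) = S 0 - 2 * S 1 + S 2"
    by (simp add: numeral_2_eq_2)
  ultimately show "(\<Sum>k\<le>2. (-1) ^ k * real (2 choose k) * (l2norm ((wsh aw ^^ k) x))\<^sup>2) = 0"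
    by (simp add: S_def)
qed



definition dS :: "nat \<Rightarrow> (nat \<Rightarrow> real) \<Rightarrow> nat \<Rightarrow> real" where
  "dS m h j = (\<Sum>k\<le>m. (-1)^k * real (m choose k) * h (j+k))"

lemma dS_ext: "dS m h j = h j + (\<Sum>k\<le>m. (-1)^(Suc k) * real (m choose Suc k) * h (j + Suc k))"
proof -
  have "dS m h j = (\<Sum>k\<le>Suc m. (-1)^k * real (m choose k) * h (j+k))"
    unfolding dS_def by (simp add: binomial_eq_0)
  also have "\<dots> = h j + (\<Sum>k\<le>m. (-1)^(Suc k) * real (m choose Suc k) * h (j + Suc k))"
    by (subst sum.atMost_Suc_shift) simp
  finally show ?thesis .
qed

lemma dS_Suc: "dS (Suc m) h j = dS m h j - dS m h (Suc j)"
proof -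
  have "dS (Suc m) h j = h j + (\<Sum>k\<le>m. (-1)^(Suc k) * real (Suc m choose Suc k) * h (j + Suc k))"
    unfolding dS_def by (subst sum.atMost_Suc_shift) simp
  also have "\<dots> = h j + (\<Sum>k\<le>m. (-1)^(Suc k) * real (m choose Suc k) * h (j + Suc k))
                 + (\<Sum>k\<le>m. (-1)^(Suc k) * real (m choose k) * h (j + Suc k))"
    by (simp add: sum.distrib[symmetric] algebra_simps)
  also have "(\<Sum>k\<le>m. (-1)^(Suc k) * real (m choose k) * h (j + Suc k)) = - dS m h (Suc j)"
    unfolding dS_def by (simp add: sum_negf[symmetric])
  finally show ?thesis using dS_ext[of m h j] by simp
qed

lemma dS_diff: "dS m (\<lambda>i. f i - g i) j = dS m f j - dS m g j"
  unfolding dS_def by (simp add: sum_subtractf[symmetric] algebra_simps)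

lemma dS_shift: "dS m h (Suc j) = dS m (\<lambda>i. h (Suc i)) j"
  unfolding dS_def by simp

lemma dS_const: "dS (Suc m) (\<lambda>i. c) j = 0"
  by (simp add: dS_Suc) (simp add: dS_def)

lemma dS_lin: "dS (Suc (Suc m)) (\<lambda>i. a * real i + b) j = 0"
proof -
  have "dS (Suc (Suc m)) (\<lambda>i. a * real i + b) j = dS (Suc m) (\<lambda>i. (a * real i + b) - (a * real (Suc i) + b)) j"
    unfolding dS_Suc[of "Suc m"] dS_diff dS_shift by simp
  also have "\<dots> = dS (Suc m) (\<lambda>i. - a) j" by (simp add: algebra_simps)
  also have "\<dots> = 0" by (rule dS_const)
  finally show ?thesis .
qed

lemma dS_zero_lim: "(\<forall>j. dS m h j = 0) \<Longrightarrow> h \<longlonglongrightarrow> 0 \<Longrightarrow> h j = 0"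
proof (induction m arbitrary: h j)
  case 0 thus ?case by (simp add: dS_def)
next
  case (Suc m)
  define g where "g = (\<lambda>i. h i - h (Suc i))"
  have "dS m g j = 0" for j using Suc.prems(1) unfolding g_def dS_diff dS_Suc
    by (simp add: dS_def)
  moreover have "g \<longlonglongrightarrow> 0" unfolding g_def
    using tendsto_diff[OF Suc.prems(2) LIMSEQ_Suc[OF Suc.prems(2)]] by simp
  ultimately have g0: "g i = 0" for i using Suc.IH by blast
  have hc: "h i = h 0" for i by (induction i) (use g0 in \<open>auto simp: g_def\<close>)
  have "h = (\<lambda>i. h 0)" by (rule ext) (rule hc)
  hence "(\<lambda>i. h 0) \<longlonglongrightarrow> 0" using Suc.prems(2) by simp
  hence "h 0 = 0" by (simp add: LIMSEQ_const_iff)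
  thus ?case using hc by simp
qed


definition Q :: "real \<Rightarrow> nat \<Rightarrow> real" where
  "Q l n = (real n + 1) powr (1 - l) * (real n + 2) powr l"

definition bw :: "real \<Rightarrow> nat \<Rightarrow> real" where
  "bw l n = aw n powr (1 - l) * aw (Suc n) powr l"

lemma Q_pos: "Q l n > 0" by (simp add: Q_def)

lemma sq_powr: "(x powr a)\<^sup>2 = (x\<^sup>2) powr (a::real)" for x :: real
  by (simp add: power2_eq_square powr_mult)

lemma Q_step: "Q l (Suc n) = Q l n * (bw l n)\<^sup>2"
proof -
  have a1: "(aw n)\<^sup>2 = (real n + 2) / (real n + 1)" by (rule aw_sq)
  have r1: "real (Suc n) + 2 = real n + 3" "real (Suc n) + 1 = real n + 2" by simp_all
  have a2: "(aw (Suc n))\<^sup>2 = (real n + 3) / (real n + 2)" using aw_sq[of "Suc n"] unfolding r1 .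
  have "(bw l n)\<^sup>2 = ((real n + 2) / (real n + 1)) powr (1-l) * ((real n + 3) / (real n + 2)) powr l"
    unfolding bw_def power_mult_distrib sq_powr a1 a2 ..
  also have "\<dots> = (real n + 2) powr (1-l) / (real n + 1) powr (1-l) * ((real n + 3) powr l / (real n + 2) powr l)"
    by (simp add: powr_divide)
  finally have b: "(bw l n)\<^sup>2 = (real n + 2) powr (1-l) / (real n + 1) powr (1-l) * ((real n + 3) powr l / (real n + 2) powr l)" .
  have p1: "(real n + 1) powr (1-l) > 0" and p2: "(real n + 2) powr l > 0" by auto
  have "Q l n * (bw l n)\<^sup>2 = (real n + 2) powr (1-l) * (real n + 3) powr l"
    unfolding b Q_def using p1 p2 by (simp add: field_simps)
  also have "\<dots> = Q l (Suc n)" unfolding Q_def by (simp add: add.commute)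
  finally show ?thesis by simp
qed

lemma bw_prod: "(\<Prod>i\<in>{j..<j+k}. bw l i)\<^sup>2 = Q l (j+k) / Q l j"
proof (induction k)
  case 0 thus ?case using Q_pos[of l j] by simp
next
  case (Suc k)
  have "(\<Prod>i\<in>{j..<j+Suc k}. bw l i)\<^sup>2 = (\<Prod>i\<in>{j..<j+k}. bw l i)\<^sup>2 * (bw l (j+k))\<^sup>2"
    by (simp add: prod.atLeastLessThan_Suc power_mult_distrib)
  also have "\<dots> = Q l (j + Suc k) / Q l j" unfolding Suc.IH using Q_step[of l "j+k"] by simp
  finally show ?case .
qed

lemma Q_alt: "Q l n = (real n + 1) * ((real n + 2) / (real n + 1)) powr l"
proof -
  have p: "(real n + 1) powr l > 0" by simp
  have "(real n + 1) powr (1 - l) = (real n + 1) / (real n + 1) powr l"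
    by (simp add: powr_diff)
  thus ?thesis unfolding Q_def powr_divide by simp
qed

lemma hh_lim: "(\<lambda>n. Q l n - (real n + 1 + l)) \<longlonglongrightarrow> 0"
proof -
  have d0: "DERIV (\<lambda>t. (1+t) powr l) 0 :> (1+0) powr l * (0 * ln (1+0) + 1 * l / (1+0))"
    by (rule DERIV_powr) (auto intro!: derivative_eq_intros)
  hence "DERIV (\<lambda>t. (1+t) powr l) 0 :> l" by simp
  hence G: "((\<lambda>t. ((1 + (0 + t)) powr l - (1 + 0) powr l) / t) \<longlongrightarrow> l) (at 0)"
    unfolding DERIV_def .
  have t: "(\<lambda>n. 1 / (real n + 1)) \<longlonglongrightarrow> 0"
    using LIMSEQ_Suc[OF lim_1_over_n] by (simp add: add.commute)
  have "filterlim (\<lambda>n. 1 / (real n + 1)) (at 0) sequentially"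
    by (rule filterlim_atI[OF t]) simp
  from filterlim_compose[OF G this]
  have "(\<lambda>n. ((1 + (0 + 1 / (real n + 1))) powr l - (1 + 0) powr l) / (1 / (real n + 1))) \<longlonglongrightarrow> l" .
  moreover have "((1 + (0 + 1 / (real n + 1))) powr l - (1 + 0) powr l) / (1 / (real n + 1)) = Q l n - (real n + 1 + l) + l" for n
  proof -
    have "1 + (0 + 1 / (real n + 1)) = (real n + 2) / (real n + 1)" by (simp add: field_simps)
    thus ?thesis unfolding Q_alt by (simp add: field_simps)
  qed
  ultimately have lim1: "(\<lambda>n. Q l n - (real n + 1 + l) + l) \<longlonglongrightarrow> l" by simp
  have eq: "(\<lambda>n. Q l n - (real n + 1 + l) + l - l) = (\<lambda>n. Q l n - (real n + 1 + l))" by (simp add: algebra_simps)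
  show ?thesis using tendsto_diff[OF lim1 tendsto_const[of l]] unfolding eq diff_self .
qed

lemma hh_nonzero: assumes "0 < l" "l < 1" shows "\<exists>n. Q l n - (real n + 1 + l) \<noteq> 0"
proof (rule ccontr)
  assume "\<not> ?thesis"
  hence z: "Q l n = real n + 1 + l" for n by auto
  define A where "A = 2 powr l"
  define B where "B = 3 powr l"
  have Ap: "A > 0" and Bp: "B > 0" by (auto simp: A_def B_def)
  have q0: "Q l 0 = A" by (simp add: Q_def A_def)
  have "Q l 1 = 2 powr (1 - l) * B" by (simp add: Q_def B_def)
  also have "2 powr (1 - l) = 2 / A" by (simp add: A_def powr_diff)
  finally have q1: "Q l 1 = 2 * B / A" by simp
  have "Q l 2 = 3 powr (1 - l) * 4 powr l" by (simp add: Q_def)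
  also have "3 powr (1 - l) = 3 / B" by (simp add: B_def powr_diff)
  also have "(4::real) powr l = A * A" unfolding A_def by (simp add: powr_mult[symmetric])
  finally have q2: "Q l 2 = 3 * A * A / B" by simp
  have e0: "A = 1 + l" using z[of 0] q0 by simp
  have e1: "2 * B = (2 + l) * A" using z[of 1] q1 Ap by (simp add: field_simps)
  have e2: "3 * A * A = (3 + l) * B" using z[of 2] q2 Bp by (simp add: field_simps)
  have "6 * A * A = 2 * (3 * A * A)" by simp
  also have "\<dots> = 2 * ((3 + l) * B)" using e2 by simp
  also have "\<dots> = (3 + l) * (2 * B)" by simp
  also have "\<dots> = (3 + l) * ((2 + l) * A)" using e1 by simp
  finally have "6 * A * A = (3 + l) * (2 + l) * A" by simp
  hence "A * (6 * A - (3 + l) * (2 + l)) = 0" by (simp add: algebra_simps)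
  hence "6 * A = (3 + l) * (2 + l)" using Ap by simp
  hence "l * l = l" using e0 by (simp add: algebra_simps)
  hence "l = 1 \<or> l = 0" by (metis mult_cancel_right1 mult_eq_0_iff)
  thus False using assms by auto
qed


lemma aw_powr_le: "0 \<le> a \<Longrightarrow> a \<le> 1 \<Longrightarrow> aw n powr a \<le> 2"
proof -
  assume a: "0 \<le> a" "a \<le> 1"
  have "aw n powr a \<le> aw n powr 1" by (rule powr_mono) (use a aw_ge1 in auto)
  also have "\<dots> = aw n" using aw_pos[of n] by simp
  finally show ?thesis using aw_bound[of n] by simp
qed

lemma bw_bound: assumes "0 \<le> l" "l \<le> 1" shows "\<bar>bw l n\<bar> \<le> 4"
proof -
  have "bw l n \<le> 2 * 2" unfolding bw_def
    by (rule mult_mono) (use assms aw_powr_le in auto)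
  moreover have "bw l n \<ge> 0" by (simp add: bw_def)
  ultimately show ?thesis by simp
qed

definition ev :: "nat \<Rightarrow> seq" where "ev j = (\<lambda>i. if i = j then 1 else 0)"

lemma ev_L2: "ev j \<in> L2"
proof -
  have "(\<lambda>i. if i = j then 1 else 0) sums (1::real)" using sums_single[of j "\<lambda>_. 1::real"] by simp
  moreover have "(\<lambda>i. (cmod (ev j i))\<^sup>2) = (\<lambda>i. if i = j then 1 else 0)"
    by (rule ext) (simp add: ev_def)
  ultimately have "summable (\<lambda>i. (cmod (ev j i))\<^sup>2)" by (simp add: sums_summable)
  thus ?thesis by (simp add: L2_def)
qed

lemma not_miso: assumes l: "0 < l" "l < 1" and m: "m \<ge> 2" shows "\<not> m_isometry m (wsh (bw l))"
proof
  assume iso: "m_isometry m (wsh (bw l))"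
  have bb: "\<And>n. \<bar>bw l n\<bar> \<le> 4" using bw_bound l by simp
  have nrm: "(l2norm ((wsh (bw l) ^^ k) (ev j)))\<^sup>2 = Q l (j+k) / Q l j" for j k
  proof -
    have s: "(\<lambda>i. (\<Prod>n\<in>{i..<i+k}. bw l n)\<^sup>2 * (cmod (ev j i))\<^sup>2) sums (l2norm ((wsh (bw l) ^^ k) (ev j)))\<^sup>2"
      by (rule wsh_pow_norm[where C=4, OF ev_L2 bb])
    have "(\<lambda>i. (\<Prod>n\<in>{i..<i+k}. bw l n)\<^sup>2 * (cmod (ev j i))\<^sup>2) = (\<lambda>i. if i = j then (\<Prod>n\<in>{j..<j+k}. bw l n)\<^sup>2 else 0)"
      by (rule ext) (simp add: ev_def)
    moreover have "(\<lambda>i. if i = j then (\<Prod>n\<in>{j..<j+k}. bw l n)\<^sup>2 else 0) sums (\<Prod>n\<in>{j..<j+k}. bw l n)\<^sup>2"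
      using sums_single[of j "\<lambda>_. (\<Prod>n\<in>{j..<j+k}. bw l n)\<^sup>2"] by simp
    ultimately have "(l2norm ((wsh (bw l) ^^ k) (ev j)))\<^sup>2 = (\<Prod>n\<in>{j..<j+k}. bw l n)\<^sup>2"
      using s sums_unique2 by metis
    thus ?thesis by (simp add: bw_prod)
  qed
  have dQ: "dS m (Q l) j = 0" for j
  proof -
    have "(\<Sum>k\<le>m. (-1) ^ k * real (m choose k) * (l2norm ((wsh (bw l) ^^ k) (ev j)))\<^sup>2) = 0"
      using iso ev_L2[of j] unfolding m_isometry_def by blast
    hence "(\<Sum>k\<le>m. (-1) ^ k * real (m choose k) * (Q l (j+k) / Q l j)) = 0"
      by (simp only: nrm)
    hence "(\<Sum>k\<le>m. (-1) ^ k * real (m choose k) * Q l (j+k)) / Q l j = 0"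
      by (simp add: sum_divide_distrib)
    thus ?thesis using Q_pos[of l j] by (simp add: dS_def)
  qed
  obtain m' where m': "m = Suc (Suc m')" using m by (metis add_2_eq_Suc le_Suc_ex)
  define h where "h = (\<lambda>i. Q l i - (1 * real i + (1 + l)))"
  have dh: "dS m h j = 0" for j
    unfolding h_def dS_diff using dQ[of j] dS_lin[of m' 1 "1+l" j] m' by simp
  have "h = (\<lambda>n. Q l n - (real n + 1 + l))" unfolding h_def by (rule ext) (simp add: algebra_simps)
  hence hl: "h \<longlonglongrightarrow> 0" using hh_lim[of l] by simp
  have "h j = 0" for j using dS_zero_lim[of m h j] dh hl by blast
  thus False using hh_nonzero[OF l] unfolding h_def by (simp add: algebra_simps)
qed


definition bsh :: "(nat \<Rightarrow> real) \<Rightarrow> op" where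
  "bsh w = (\<lambda>y. if y \<in> L2 then (\<lambda>n. complex_of_real (w n) * y (Suc n)) else (\<lambda>n. 0))"

lemma l2norm_shiftL: assumes "y \<in> L2" shows "l2norm (\<lambda>n. y (Suc n)) \<le> l2norm y"
proof -
  have s: "summable (\<lambda>n. (cmod (y n))\<^sup>2)" using assms by (simp add: L2_def)
  have "(\<Sum>n. (cmod (y (Suc n)))\<^sup>2) = (\<Sum>n. (cmod (y n))\<^sup>2) - (cmod (y 0))\<^sup>2"
    using suminf_split_head[OF s] by simp
  hence "(\<Sum>n. (cmod (y (Suc n)))\<^sup>2) \<le> (\<Sum>n. (cmod (y n))\<^sup>2)" by simp
  thus ?thesis unfolding l2norm_def by simp
qed

lemma is_bop_bsh: assumes "\<And>n. \<bar>w n\<bar> \<le> C" shows "is_bop (bsh w)"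
  unfolding is_bop_def
proof (intro conjI ballI allI impI)
  fix x assume "x \<notin> L2" thus "bsh w x = (\<lambda>n. 0)" by (simp add: bsh_def)
next
  fix x assume x: "x \<in> L2" thus "bsh w x \<in> L2"
    unfolding bsh_def using L2_mult[OF L2_shiftL[OF x], of "\<lambda>n. complex_of_real (w n)" C] assms by simp
next
  fix x y a b assume xy: "x \<in> L2" "y \<in> L2"
  hence "(\<lambda>n. a * x n + b * y n) \<in> L2" by (rule L2_lin)
  thus "bsh w (\<lambda>n. a * x n + b * y n) = (\<lambda>n. a * bsh w x n + b * bsh w y n)"
    using xy by (simp add: bsh_def algebra_simps)
next
  have C: "C \<ge> 0" using assms[of 0] by linarith
  have "l2norm (bsh w x) \<le> C * l2norm x" if x: "x \<in> L2" for x
  proof -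
    have "l2norm (bsh w x) = l2norm (\<lambda>n. complex_of_real (w n) * x (Suc n))" using x by (simp add: bsh_def)
    also have "\<dots> \<le> C * l2norm (\<lambda>n. x (Suc n))" by (rule l2norm_mult[OF L2_shiftL[OF x]]) (use assms in simp)
    also have "\<dots> \<le> C * l2norm x" using l2norm_shiftL[OF x] C by (rule mult_left_mono)
    finally show ?thesis .
  qed
  thus "\<exists>C. \<forall>x\<in>L2. l2norm (bsh w x) \<le> C * l2norm x" by blast
qed

lemma inner_summable: assumes "x \<in> L2" "y \<in> L2" shows "summable (\<lambda>n. x n * cnj (y n))"
proof -
  have sx: "summable (\<lambda>n. (cmod (x n))\<^sup>2)" and sy: "summable (\<lambda>n. (cmod (y n))\<^sup>2)"
    using assms by (auto simp: L2_def)
  have le: "norm (x n * cnj (y n)) \<le> (cmod (x n))\<^sup>2 + (cmod (y n))\<^sup>2" for n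
  proof -
    have e: "norm (x n * cnj (y n)) = cmod (x n) * cmod (y n)" unfolding norm_mult complex_mod_cnj ..
    have a: "0 \<le> (cmod (x n) - cmod (y n))\<^sup>2" by (rule zero_le_power2)
    have b: "0 \<le> cmod (x n) * cmod (y n)" by (intro mult_nonneg_nonneg norm_ge_zero)
    show ?thesis unfolding e using a b unfolding power2_diff by linarith
  qed
  show ?thesis by (rule summable_comparison_test'[OF summable_add[OF sx sy] le])
qed

lemma inner_ev: "l2inner (ev j) z = cnj (z j)"
proof -
  have "(\<lambda>n. ev j n * cnj (z n)) = (\<lambda>n. if n = j then cnj (z j) else 0)" by (rule ext) (simp add: ev_def)
  moreover have "(\<lambda>n. if n = j then cnj (z j) else 0) sums cnj (z j)"
    using sums_single[of j "\<lambda>_. cnj (z j)"] by simp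
  ultimately have "(\<lambda>n. ev j n * cnj (z n)) sums cnj (z j)" by simp
  thus ?thesis unfolding l2inner_def by (rule sums_unique[symmetric])
qed

lemma adj_wsh_rel: assumes "\<And>n. \<bar>w n\<bar> \<le> C" and x: "x \<in> L2" and y: "y \<in> L2"
  shows "l2inner (wsh w x) y = l2inner x (bsh w y)"
proof -
  have wx: "wsh w x \<in> L2" by (rule wsh_L2[OF x assms(1)])
  have s: "summable (\<lambda>n. wsh w x n * cnj (y n))" by (rule inner_summable[OF wx y])
  have "l2inner (wsh w x) y = (\<Sum>n. wsh w x (Suc n) * cnj (y (Suc n)))"
    unfolding l2inner_def using suminf_split_head[OF s] by simp
  also have "(\<lambda>n. wsh w x (Suc n) * cnj (y (Suc n))) = (\<lambda>n. x n * cnj (bsh w y n))"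
  proof
    fix n
    have "wsh w x (Suc n) = complex_of_real (w n) * x n" by (rule wsh_Suc[OF x])
    moreover have "bsh w y n = complex_of_real (w n) * y (Suc n)" using y by (simp add: bsh_def)
    ultimately show "wsh w x (Suc n) * cnj (y (Suc n)) = x n * cnj (bsh w y n)" by simp
  qed
  finally show ?thesis unfolding l2inner_def .
qed

lemma adj_wsh: assumes "\<And>n. \<bar>w n\<bar> \<le> C" shows "adj (wsh w) = bsh w"
  unfolding adj_def
proof (rule the_equality)
  have B: "\<forall>x\<in>L2. \<forall>y\<in>L2. l2inner (wsh w x) y = l2inner x (bsh w y)"
    using adj_wsh_rel[of w C] assms by blast
  thus "is_bop (bsh w) \<and> (\<forall>x\<in>L2. \<forall>y\<in>L2. l2inner (wsh w x) y = l2inner x (bsh w y))"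
    using is_bop_bsh[of w C] assms by blast
next
  fix S assume S: "is_bop S \<and> (\<forall>x\<in>L2. \<forall>y\<in>L2. l2inner (wsh w x) y = l2inner x (S y))"
  have B: "\<forall>x\<in>L2. \<forall>y\<in>L2. l2inner (wsh w x) y = l2inner x (bsh w y)"
    using adj_wsh_rel[of w C] assms by blast
  show "S = bsh w"
  proof
    fix y show "S y = bsh w y"
    proof (cases "y \<in> L2")
      case False
      have "S y = (\<lambda>n. 0)" using S False unfolding is_bop_def by blast
      thus ?thesis using False by (simp add: bsh_def)
    next
      case True
      show ?thesis
      proof
        fix n
        have "l2inner (ev n) (S y) = l2inner (ev n) (bsh w y)"
          using S B ev_L2[of n] True by metis
        hence "cnj (S y n) = cnj (bsh w y n)" unfolding inner_ev .
        thus "S y n = bsh w y n" by simp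
      qed
    qed
  qed
qed


lemma diag_pow: assumes "x \<in> L2" "\<And>n. \<bar>d n\<bar> \<le> C"
  shows "(diag d ^^ i) x = (\<lambda>n. complex_of_real (d n ^ i) * x n)"
proof (induction i)
  case 0 show ?case by simp
next
  case (Suc i)
  have bop: "is_bop (diag d)" using is_bop_diag assms(2) by blast
  have L: "(diag d ^^ i) x \<in> L2" by (rule funpow_L2[OF bop assms(1)])
  have "(diag d ^^ Suc i) x = diag d ((diag d ^^ i) x)" by simp
  also have "\<dots> = (\<lambda>n. complex_of_real (d n) * (diag d ^^ i) x n)" using L by (simp add: diag_def)
  also have "\<dots> = (\<lambda>n. complex_of_real (d n ^ Suc i) * x n)" unfolding Suc.IH by (simp add: mult_ac)
  finally show ?case .
qed

lemma poly_op_diag: assumes "x \<in> L2" "\<And>n. \<bar>d n\<bar> \<le> C"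
  shows "poly_op p (diag d) x = (\<lambda>n. complex_of_real (poly p (d n)) * x n)"
proof
  fix n
  have "poly_op p (diag d) x n = (\<Sum>i\<le>degree p. complex_of_real (coeff p i) * (complex_of_real (d n ^ i) * x n))"
    unfolding poly_op_def diag_pow[OF assms] ..
  also have "\<dots> = complex_of_real (\<Sum>i\<le>degree p. coeff p i * d n ^ i) * x n"
    by (simp add: sum_distrib_right sum_distrib_left mult_ac)
  also have "\<dots> = complex_of_real (poly p (d n)) * x n" by (simp only: poly_altdef)
  finally show "poly_op p (diag d) x n = complex_of_real (poly p (d n)) * x n" .
qed

lemma l2norm_zero[simp]: "l2norm (\<lambda>n. 0) = 0" by (simp add: l2norm_def)

lemma l2norm_nonneg: "x \<in> L2 \<Longrightarrow> l2norm x \<ge> 0" by (simp add: l2norm_def suminf_nonneg L2_def)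

lemma op_norm_le: assumes "\<And>x. x \<in> L2 \<Longrightarrow> l2norm x \<le> 1 \<Longrightarrow> l2norm (A x) \<le> B" shows "op_norm A \<le> B"
  unfolding op_norm_def
proof (rule cSup_least)
  have "(\<lambda>n. 0) \<in> {x \<in> L2. l2norm x \<le> 1}" by simp
  thus "(\<lambda>x. l2norm (A x)) ` {x \<in> L2. l2norm x \<le> 1} \<noteq> {}" by blast
qed (use assms in auto)

lemma op_norm_ge: assumes "\<And>x. x \<in> L2 \<Longrightarrow> l2norm x \<le> 1 \<Longrightarrow> l2norm (A x) \<le> B"
  and "x \<in> L2" "l2norm x \<le> 1" shows "l2norm (A x) \<le> op_norm A"
  unfolding op_norm_def
proof (rule cSup_upper)
  show "bdd_above ((\<lambda>x. l2norm (A x)) ` {x \<in> L2. l2norm x \<le> 1})"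
    using assms(1) by (auto intro!: bdd_aboveI)
qed (use assms in auto)

lemma l2norm_single: "l2norm (\<lambda>i. if i = n then c else 0) = cmod c"
proof -
  have "(\<lambda>i. (cmod (if i = n then c else 0))\<^sup>2) = (\<lambda>i. if i = n then (cmod c)\<^sup>2 else 0)"
    by (rule ext) simp
  moreover have "(\<lambda>i. if i = n then (cmod c)\<^sup>2 else 0) sums (cmod c)\<^sup>2"
    using sums_single[of n "\<lambda>_. (cmod c)\<^sup>2"] by simp
  ultimately have "(\<Sum>i. (cmod (if i = n then c else 0))\<^sup>2) = (cmod c)\<^sup>2" by (simp add: sums_iff)
  thus ?thesis unfolding l2norm_def by simp
qed

lemma coord_le: assumes "z \<in> L2" shows "cmod (z n) \<le> l2norm z"
proof -
  have s: "summable (\<lambda>n. (cmod (z n))\<^sup>2)" using assms by (simp add: L2_def)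
  have "sum (\<lambda>n. (cmod (z n))\<^sup>2) {n} \<le> (\<Sum>n. (cmod (z n))\<^sup>2)"
    by (rule sum_le_suminf[OF s]) auto
  hence "(cmod (z n))\<^sup>2 \<le> (\<Sum>n. (cmod (z n))\<^sup>2)" by simp
  hence "sqrt ((cmod (z n))\<^sup>2) \<le> l2norm z" unfolding l2norm_def by (rule real_sqrt_le_mono)
  thus ?thesis by simp
qed

lemma l2norm_diff_le: assumes "u \<in> L2" "v \<in> L2" "l2norm u \<le> a" "l2norm v \<le> b"
  shows "l2norm (\<lambda>n. u n - v n) \<le> 2 * (a + b)"
proof -
  have su: "summable (\<lambda>n. (cmod (u n))\<^sup>2)" and sv: "summable (\<lambda>n. (cmod (v n))\<^sup>2)"
    using assms by (auto simp: L2_def)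
  have L: "(\<lambda>n. 1 * u n + (-1) * v n) \<in> L2" by (rule L2_lin[OF assms(1,2)])
  hence sd: "summable (\<lambda>n. (cmod (u n - v n))\<^sup>2)" by (simp add: L2_def)
  have le: "(cmod (u n - v n))\<^sup>2 \<le> 2 * (cmod (u n))\<^sup>2 + 2 * (cmod (v n))\<^sup>2" for n
    using sq_sum_le[of "u n" "- v n"] by simp
  have "(\<Sum>n. (cmod (u n - v n))\<^sup>2) \<le> (\<Sum>n. 2 * (cmod (u n))\<^sup>2 + 2 * (cmod (v n))\<^sup>2)"
    by (rule suminf_le[OF le sd]) (intro summable_add summable_mult su sv)
  also have "\<dots> = 2 * (l2norm u)\<^sup>2 + 2 * (l2norm v)\<^sup>2"
    using su sv by (simp add: suminf_add[symmetric] suminf_mult l2norm_def suminf_nonneg)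
  also have "\<dots> \<le> 2 * a\<^sup>2 + 2 * b\<^sup>2"
    using assms(3,4) l2norm_nonneg[OF assms(1)] l2norm_nonneg[OF assms(2)]
    by (intro add_mono mult_left_mono power_mono) auto
  also have "\<dots> \<le> (2 * (a + b))\<^sup>2"
    using l2norm_nonneg[OF assms(1)] l2norm_nonneg[OF assms(2)] assms(3,4) by (simp add: power2_eq_square algebra_simps)
  finally have "sqrt (\<Sum>n. (cmod (u n - v n))\<^sup>2) \<le> sqrt ((2 * (a + b))\<^sup>2)" by (rule real_sqrt_le_mono)
  moreover have "a + b \<ge> 0" using l2norm_nonneg[OF assms(1)] l2norm_nonneg[OF assms(2)] assms(3,4) by linarith
  ultimately show ?thesis unfolding l2norm_def by simp
qed



lemma poly_approx: assumes "0 < r" "0 \<le> M"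
  shows "\<exists>p :: nat \<Rightarrow> real poly. uniform_limit {0..M} (\<lambda>k t. poly (p k) t) (\<lambda>t. t powr r) sequentially"
proof -
  have cont: "continuous_on {0..M} (\<lambda>t. t powr r)"
    by (rule continuous_on_powr') (use assms in \<open>auto intro: continuous_intros\<close>)
  have "\<exists>q. \<forall>t\<in>{0..M}. \<bar>t powr r - poly q t\<bar> < 1 / (real k + 1)" for k :: nat
  proof -
    have "(0::real) < 1 / (real k + 1)" by simp
    from Stone_Weierstrass_real_polynomial_function[OF compact_Icc cont this]
    obtain g where g: "real_polynomial_function g" "\<And>x. x \<in> {0..M} \<Longrightarrow> \<bar>x powr r - g x\<bar> < 1 / (real k + 1)"
      by blast
    from real_polynomial_function_imp_sum[OF g(1)] obtain a n where gn: "g = (\<lambda>x. \<Sum>i\<le>n. a i * x ^ i)"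
      by blast
    define q where "q = (\<Sum>i\<le>n. monom (a i) i)"
    have "poly q x = g x" for x unfolding q_def gn by (simp add: poly_sum poly_monom)
    thus ?thesis using g(2) by metis
  qed
  then obtain p where p: "\<And>k. \<forall>t\<in>{0..M}. \<bar>t powr r - poly (p k) t\<bar> < 1 / (real k + 1)" by metis
  have "uniform_limit {0..M} (\<lambda>k t. poly (p k) t) (\<lambda>t. t powr r) sequentially"
  proof (rule uniform_limitI)
    fix e :: real assume e: "0 < e"
    obtain N :: nat where N: "N > 0" "inverse (real N) < e" using ex_inverse_of_nat_less[OF e] by blast
    show "\<forall>\<^sub>F k in sequentially. \<forall>t\<in>{0..M}. dist (poly (p k) t) (t powr r) < e"
      unfolding eventually_sequentially
    proof (intro exI allI impI ballI)
      fix k t assume k: "N \<le> k" and t: "t \<in> {0..M}"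
      have le: "1 / (real k + 1) \<le> inverse (real N)" using k N(1) by (simp add: field_simps)
      have a: "\<bar>t powr r - poly (p k) t\<bar> < 1 / (real k + 1)" using p[of k] t by blast
      show "dist (poly (p k) t) (t powr r) < e"
        using a le N(2) abs_minus_commute[of "poly (p k) t" "t powr r"] unfolding dist_real_def by linarith
    qed
  qed
  thus ?thesis by blast
qed

lemma bop_scale: assumes "is_bop G" "x \<in> L2" shows "G (\<lambda>n. a * x n) = (\<lambda>n. a * G x n)"
proof -
  have "G (\<lambda>n. a * x n + 0 * x n) = (\<lambda>n. a * G x n + 0 * G x n)" using assms unfolding is_bop_def by blast
  thus ?thesis by simp
qed

lemma op_pow_diag:
  assumes r: "0 < r" and d0: "\<And>n. 0 \<le> d n" and dC: "\<And>n. d n \<le> C"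
  shows "op_pow r (diag d) = diag (\<lambda>n. d n powr r)"
proof -
  have dB: "\<bar>d n\<bar> \<le> C" for n using d0[of n] dC[of n] by simp
  have C0: "0 \<le> C" using d0[of 0] dC[of 0] by linarith
  define M where "M = op_norm (diag d)"
  have bA: "l2norm (diag d x) \<le> C" if "x \<in> L2" "l2norm x \<le> 1" for x
  proof -
    have "l2norm (diag d x) = l2norm (\<lambda>n. complex_of_real (d n) * x n)" using that by (simp add: diag_def)
    also have "\<dots> \<le> C * l2norm x" by (rule l2norm_mult) (use that dB in auto)
    also have "\<dots> \<le> C" using that C0 by (simp add: mult_left_le)
    finally show ?thesis .
  qed
  have dM: "d n \<le> M" for n
  proof -
    have "diag d (ev n) = (\<lambda>i. if i = n then complex_of_real (d n) else 0)"
      using ev_L2[of n] by (auto simp: diag_def ev_def)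
    hence "l2norm (diag d (ev n)) = d n" using d0[of n] by (simp add: l2norm_single)
    moreover have "l2norm (ev n) \<le> 1" unfolding ev_def by (simp add: l2norm_single)
    ultimately show ?thesis using op_norm_ge[where A="diag d" and B=C, OF bA ev_L2[of n]] unfolding M_def by simp
  qed
  have M0: "0 \<le> M" using dM[of 0] d0[of 0] by linarith
  define B0 where "B0 = diag (\<lambda>n. d n powr r)"
  have B0b: "\<bar>d n powr r\<bar> \<le> C powr r" for n using powr_mono2[of r "d n" C] r d0[of n] dC[of n] by simp
  have bopB0: "is_bop B0" unfolding B0_def by (rule is_bop_diag[OF B0b])
  have K: "(\<lambda>k. op_norm (\<lambda>x n. poly_op (p k) (diag d) x n - B0 x n)) \<longlonglongrightarrow> 0"
    if U: "uniform_limit {0..M} (\<lambda>k t. poly (p k) t) (\<lambda>t. t powr r) sequentially" for p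
  proof (rule tendstoI)
    fix e :: real assume e: "0 < e"
    from uniform_limitD[OF U, of "e/2"] e
    have ev: "\<forall>\<^sub>F k in sequentially. \<forall>t\<in>{0..M}. dist (poly (p k) t) (t powr r) < e/2" by simp
    show "\<forall>\<^sub>F k in sequentially. dist (op_norm (\<lambda>x n. poly_op (p k) (diag d) x n - B0 x n)) 0 < e"
    proof (rule eventually_mono[OF ev])
      fix k assume h: "\<forall>t\<in>{0..M}. dist (poly (p k) t) (t powr r) < e/2"
      define D where "D = (\<lambda>x n. poly_op (p k) (diag d) x n - B0 x n)"
      have Dx: "D x = (\<lambda>n. complex_of_real (poly (p k) (d n) - d n powr r) * x n)" if "x \<in> L2" for x
        using poly_op_diag[OF that dB] that by (simp add: D_def B0_def diag_def algebra_simps)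
      have cb: "cmod (complex_of_real (poly (p k) (d n) - d n powr r)) \<le> e/2" for n
      proof -
        have "d n \<in> {0..M}" using d0[of n] dM[of n] by simp
        hence "dist (poly (p k) (d n)) (d n powr r) < e/2" using h by blast
        thus ?thesis by (simp add: dist_real_def del: of_real_diff)
      qed
      have bD: "l2norm (D x) \<le> e/2" if "x \<in> L2" "l2norm x \<le> 1" for x
      proof -
        have "l2norm (D x) \<le> e/2 * l2norm x" unfolding Dx[OF that(1)] by (rule l2norm_mult[OF that(1) cb])
        also have "\<dots> \<le> e/2" using that e by (simp add: mult_left_le)
        finally show ?thesis .
      qed
      have "op_norm D \<le> e/2" by (rule op_norm_le[OF bD])
      moreover have "l2norm (D (\<lambda>n. 0)) \<le> op_norm D" by (rule op_norm_ge[OF bD]) simp_all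
      moreover have "D (\<lambda>n. 0) = (\<lambda>n. 0)" using Dx[of "\<lambda>n. 0"] by simp
      ultimately show "dist (op_norm (\<lambda>x n. poly_op (p k) (diag d) x n - B0 x n)) 0 < e"
        unfolding D_def[symmetric] using e by simp
    qed
  qed
  obtain p where U: "uniform_limit {0..M} (\<lambda>k t. poly (p k) t) (\<lambda>t. t powr r) sequentially"
    using poly_approx[OF r M0] by blast
  show ?thesis unfolding op_pow_def M_def[symmetric] B0_def[symmetric]
  proof (rule the_equality)
    show "is_bop B0 \<and> (\<forall>p. uniform_limit {0..M} (\<lambda>k t. poly (p k) t) (\<lambda>t. t powr r) sequentially \<longrightarrow>
            (\<lambda>k. op_norm (\<lambda>x n. poly_op (p k) (diag d) x n - B0 x n)) \<longlonglongrightarrow> 0)"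
      using bopB0 K by blast
  next
    fix B assume B: "is_bop B \<and> (\<forall>p. uniform_limit {0..M} (\<lambda>k t. poly (p k) t) (\<lambda>t. t powr r) sequentially \<longrightarrow>
            (\<lambda>k. op_norm (\<lambda>x n. poly_op (p k) (diag d) x n - B x n)) \<longlonglongrightarrow> 0)"
    have bopB: "is_bop B" using B by blast
    have lB: "(\<lambda>k. op_norm (\<lambda>x n. poly_op (p k) (diag d) x n - B x n)) \<longlonglongrightarrow> 0" using B U by blast
    have lB0: "(\<lambda>k. op_norm (\<lambda>x n. poly_op (p k) (diag d) x n - B0 x n)) \<longlonglongrightarrow> 0" using K U by blast
    define P where "P k = (\<Sum>i\<le>degree (p k). \<bar>coeff (p k) i\<bar> * M ^ i)" for k
    have Pb: "\<bar>poly (p k) (d n')\<bar> \<le> P k" for k n'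
    proof -
      have "\<bar>poly (p k) (d n')\<bar> = \<bar>\<Sum>i\<le>degree (p k). coeff (p k) i * d n' ^ i\<bar>" by (simp only: poly_altdef)
      also have "\<dots> \<le> (\<Sum>i\<le>degree (p k). \<bar>coeff (p k) i * d n' ^ i\<bar>)" by (rule sum_abs)
      also have "\<dots> \<le> P k" unfolding P_def
      proof (rule sum_mono)
        fix i
        have "\<bar>d n'\<bar> ^ i \<le> M ^ i" using d0[of n'] dM[of n'] by (intro power_mono) auto
        thus "\<bar>coeff (p k) i * d n' ^ i\<bar> \<le> \<bar>coeff (p k) i\<bar> * M ^ i"
          by (simp add: abs_mult power_abs mult_left_mono)
      qed
      finally show ?thesis .
    qed
    have P0: "0 \<le> P k" for k using Pb[of k 0] by linarith
    have gen: "cmod (poly_op (p k) (diag d) x n - G x n) \<le> op_norm (\<lambda>x n. poly_op (p k) (diag d) x n - G x n)"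
      if G: "is_bop G" and x: "x \<in> L2" "l2norm x \<le> 1" for G k x n
    proof -
      obtain CG where CG: "\<forall>y\<in>L2. l2norm (G y) \<le> CG * l2norm y" using G unfolding is_bop_def by blast
      have GL: "G y \<in> L2" if "y \<in> L2" for y using G that unfolding is_bop_def by blast
      have PL: "poly_op (p k) (diag d) y \<in> L2" and Pn: "l2norm (poly_op (p k) (diag d) y) \<le> P k"
        if "y \<in> L2" "l2norm y \<le> 1" for y
      proof -
        have cP: "cmod (complex_of_real (poly (p k) (d n'))) \<le> P k" for n' using Pb[of k n'] by simp
        show "poly_op (p k) (diag d) y \<in> L2" unfolding poly_op_diag[OF that(1) dB] by (rule L2_mult[OF that(1) cP])
        have "l2norm (poly_op (p k) (diag d) y) \<le> P k * l2norm y"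
          unfolding poly_op_diag[OF that(1) dB] by (rule l2norm_mult[OF that(1) cP])
        also have "\<dots> \<le> P k" using that P0[of k] by (simp add: mult_left_le)
        finally show "l2norm (poly_op (p k) (diag d) y) \<le> P k" .
      qed
      have Gn: "l2norm (G y) \<le> max CG 0" if "y \<in> L2" "l2norm y \<le> 1" for y
      proof -
        have "l2norm (G y) \<le> CG * l2norm y" using CG that by blast
        also have "\<dots> \<le> max CG 0" using that l2norm_nonneg[OF that(1)]
          by (cases "CG \<ge> 0") (auto simp: mult_left_le intro: order_trans[OF mult_right_mono[of CG 0]] mult_nonpos_nonneg)
        finally show ?thesis .
      qed
      have bd: "l2norm ((\<lambda>x n. poly_op (p k) (diag d) x n - G x n) y) \<le> 2 * (P k + max CG 0)"
        if "y \<in> L2" "l2norm y \<le> 1" for y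
        using l2norm_diff_le[OF PL[OF that] GL[OF that(1)] Pn[OF that] Gn[OF that]] by simp
      have DL: "(\<lambda>n. poly_op (p k) (diag d) x n - G x n) \<in> L2"
        using L2_lin[OF PL[OF x] GL[OF x(1)], of 1 "-1"] by simp
      have "cmod (poly_op (p k) (diag d) x n - G x n) \<le> l2norm (\<lambda>n. poly_op (p k) (diag d) x n - G x n)"
        using coord_le[OF DL, of n] by simp
      also have "\<dots> \<le> op_norm (\<lambda>x n. poly_op (p k) (diag d) x n - G x n)"
        using op_norm_ge[where A="\<lambda>x n. poly_op (p k) (diag d) x n - G x n" and B="2 * (P k + max CG 0)", OF bd x] by simp
      finally show ?thesis .
    qed
    have unit: "B x n = B0 x n" if x: "x \<in> L2" "l2norm x \<le> 1" for x n
    proof -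
      have le: "cmod (B x n - B0 x n) \<le> op_norm (\<lambda>x n. poly_op (p k) (diag d) x n - B x n) + op_norm (\<lambda>x n. poly_op (p k) (diag d) x n - B0 x n)" for k
      proof -
        have "cmod (B x n - B0 x n) \<le> cmod (poly_op (p k) (diag d) x n - B x n) + cmod (poly_op (p k) (diag d) x n - B0 x n)"
          using norm_triangle_ineq4[of "poly_op (p k) (diag d) x n - B x n" "poly_op (p k) (diag d) x n - B0 x n"]
          by (simp add: norm_minus_commute)
        thus ?thesis using gen[OF bopB x, of k n] gen[OF bopB0 x, of k n] by linarith
      qed
      have "cmod (B x n - B0 x n) \<le> 0 + 0"
        by (rule LIMSEQ_le_const[OF tendsto_add[OF lB lB0]]) (use le in blast)
      thus ?thesis by simp
    qed
    show "B = B0"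
    proof
      fix x show "B x = B0 x"
      proof (cases "x \<in> L2")
        case False thus ?thesis using bopB bopB0 unfolding is_bop_def by metis
      next
        case True
        define c where "c = l2norm x + 1"
        have c: "c > 0" using l2norm_nonneg[OF True] by (simp add: c_def)
        define x' where "x' = (\<lambda>n. complex_of_real (1/c) * x n)"
        have cb: "cmod (complex_of_real (1/c)) \<le> 1/c" for n::nat
          unfolding norm_of_real using c by simp
        have x'L: "x' \<in> L2" unfolding x'_def by (rule L2_mult[OF True cb])
        have "l2norm x' \<le> 1/c * l2norm x" unfolding x'_def by (rule l2norm_mult[OF True cb])
        also have "\<dots> \<le> 1" using c by (simp add: c_def field_simps)
        finally have x'n: "l2norm x' \<le> 1" .
        have Bx': "B x' = (\<lambda>n. complex_of_real (1/c) * B x n)" unfolding x'_def by (rule bop_scale[OF bopB True])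
        have B0x': "B0 x' = (\<lambda>n. complex_of_real (1/c) * B0 x n)" unfolding x'_def by (rule bop_scale[OF bopB0 True])
        show ?thesis
        proof
          fix n
          have "complex_of_real (1/c) * B x n = complex_of_real (1/c) * B0 x n"
            using unit[OF x'L x'n, of n] Bx' B0x' by metis
          thus "B x n = B0 x n" using c by simp
        qed
      qed
    qed
  qed
qed


lemma adjT: "adj (wsh aw) = bsh aw" by (rule adj_wsh[OF aw_bound])

lemma compT: "adj (wsh aw) \<circ> wsh aw = diag (\<lambda>n. (aw n)\<^sup>2)"
proof
  fix x show "(adj (wsh aw) \<circ> wsh aw) x = diag (\<lambda>n. (aw n)\<^sup>2) x"
  proof (cases "x \<in> L2")
    case False
    hence "wsh aw x = (\<lambda>n. 0)" by (simp add: wsh_def)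
    thus ?thesis using False by (simp add: adjT bsh_def diag_def)
  next
    case True
    have L: "wsh aw x \<in> L2" by (rule wsh_L2[OF True aw_bound])
    show ?thesis
    proof
      fix n
      show "(adj (wsh aw) \<circ> wsh aw) x n = diag (\<lambda>n. (aw n)\<^sup>2) x n"
        using L True by (simp add: adjT bsh_def diag_def wsh_Suc power2_eq_square)
    qed
  qed
qed

lemma absT: "abs_op (wsh aw) = diag aw"
proof -
  have "abs_op (wsh aw) = op_pow (1/2) (diag (\<lambda>n. (aw n)\<^sup>2))" unfolding abs_op_def compT ..
  also have "\<dots> = diag (\<lambda>n. ((aw n)\<^sup>2) powr (1/2))"
  proof (rule op_pow_diag)
    fix n
    have "(aw n)\<^sup>2 \<le> 2\<^sup>2" by (rule power_mono) (use aw_bound[of n] aw_pos[of n] in auto)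
    thus "(aw n)\<^sup>2 \<le> 4" by simp
  qed auto
  also have "(\<lambda>n. ((aw n)\<^sup>2) powr (1/2)) = aw"
  proof
    fix n show "((aw n)\<^sup>2) powr (1/2) = aw n" using aw_pos[of n] by (simp add: powr_half_sqrt)
  qed
  finally show ?thesis .
qed

lemma one_bound: "\<bar>(\<lambda>_. 1::real) n\<bar> \<le> 1" by simp

lemma polarT: "polar_V (wsh aw) = wsh (\<lambda>_. 1)"
  unfolding polar_V_def absT
proof (rule the_equality)
  have bop1: "is_bop (wsh (\<lambda>_. 1))" by (rule is_bop_wsh[of _ 1]) simp
  have b: "wsh (\<lambda>_. 1) (diag aw x) = wsh aw x" if x: "x \<in> L2" for x
  proof
    fix n
    have L: "diag aw x \<in> L2" by (rule diag_L2[OF x aw_bound])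
    show "wsh (\<lambda>_. 1) (diag aw x) n = wsh aw x n"
      by (cases n) (use L x in \<open>simp_all add: wsh_Suc diag_def\<close>)
  qed
  show "is_bop (wsh (\<lambda>_. 1)) \<and> (\<forall>x\<in>L2. wsh (\<lambda>_. 1) (diag aw x) = wsh aw x) \<and>
        (\<forall>x\<in>L2. wsh aw x = (\<lambda>n. 0) \<longrightarrow> wsh (\<lambda>_. 1) x = (\<lambda>n. 0))"
  proof (intro conjI ballI impI)
    show "is_bop (wsh (\<lambda>_. 1))" by (rule bop1)
  next
    fix x assume "x \<in> L2" thus "wsh (\<lambda>_. 1) (diag aw x) = wsh aw x" by (rule b)
  next
    fix x assume x: "x \<in> L2" and z: "wsh aw x = (\<lambda>n. 0)"
    show "wsh (\<lambda>_. 1) x = (\<lambda>n. 0)"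
    proof
      fix n show "wsh (\<lambda>_. 1) x n = 0"
      proof (cases n)
        case 0 thus ?thesis by simp
      next
        case (Suc m)
        have "complex_of_real (aw m) * x m = 0" using fun_cong[OF z, of "Suc m"] wsh_Suc[OF x] by simp
        hence "x m = 0" using aw_pos[of m] by simp
        thus ?thesis using Suc wsh_Suc[OF x] by simp
      qed
    qed
  qed
next
  fix V assume V: "is_bop V \<and> (\<forall>x\<in>L2. V (diag aw x) = wsh aw x) \<and> (\<forall>x\<in>L2. wsh aw x = (\<lambda>n. 0) \<longrightarrow> V x = (\<lambda>n. 0))"
  have b: "wsh (\<lambda>_. 1) (diag aw x) = wsh aw x" if x: "x \<in> L2" for x
  proof
    fix n
    have L: "diag aw x \<in> L2" by (rule diag_L2[OF x aw_bound])
    show "wsh (\<lambda>_. 1) (diag aw x) n = wsh aw x n"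
      by (cases n) (use L x in \<open>simp_all add: wsh_Suc diag_def\<close>)
  qed
  show "V = wsh (\<lambda>_. 1)"
  proof
    fix y show "V y = wsh (\<lambda>_. 1) y"
    proof (cases "y \<in> L2")
      case False
      have "V y = (\<lambda>n. 0)" using V False unfolding is_bop_def by blast
      thus ?thesis using False by (simp add: wsh_def)
    next
      case True
      define x where "x = (\<lambda>n. complex_of_real (1 / aw n) * y n)"
      have cb: "cmod (complex_of_real (1 / aw n)) \<le> 1" for n
        unfolding norm_of_real using aw_ge1[of n] aw_pos[of n] by simp
      have xL: "x \<in> L2" unfolding x_def by (rule L2_mult[OF True cb])
      have dx: "diag aw x = y"
      proof
        fix n show "diag aw x n = y n" using xL aw_pos[of n] by (simp add: diag_def x_def)
      qed
      have "V y = wsh aw x" using V xL dx by metis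
      also have "\<dots> = wsh (\<lambda>_. 1) y" using b[OF xL] dx by simp
      finally show ?thesis .
    qed
  qed
qed

lemma op_pow_aw: assumes "0 < r" "r \<le> 1" shows "op_pow r (diag aw) = diag (\<lambda>n. aw n powr r)"
  by (rule op_pow_diag[of r aw 2]) (use assms aw_pos aw_bound in \<open>auto simp: less_imp_le abs_le_iff\<close>)

lemma aluthgeT: assumes "0 < l" "l < 1" shows "aluthge l (wsh aw) = wsh (bw l)"
proof -
  have e: "aluthge l (wsh aw) = diag (\<lambda>n. aw n powr l) \<circ> wsh (\<lambda>_. 1) \<circ> diag (\<lambda>n. aw n powr (1 - l))"
    unfolding aluthge_def absT polarT using op_pow_aw[of l] op_pow_aw[of "1-l"] assms by simp
  have b1: "\<bar>aw n powr (1 - l)\<bar> \<le> 2" for n using aw_powr_le[of "1-l" n] assms by simp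
  show ?thesis unfolding e
  proof
    fix x show "(diag (\<lambda>n. aw n powr l) \<circ> wsh (\<lambda>_. 1) \<circ> diag (\<lambda>n. aw n powr (1 - l))) x = wsh (bw l) x"
    proof (cases "x \<in> L2")
      case False
      have "wsh (\<lambda>_. 1) (\<lambda>n. 0) = (\<lambda>n. 0)"
      proof
        fix n show "wsh (\<lambda>_. 1) (\<lambda>n. 0) n = 0" by (cases n) (simp_all add: wsh_Suc)
      qed
      thus ?thesis using False by (simp add: diag_def wsh_def)
    next
      case True
      have L1: "diag (\<lambda>n. aw n powr (1 - l)) x \<in> L2" by (rule diag_L2[OF True b1])
      have L2': "wsh (\<lambda>_. 1) (diag (\<lambda>n. aw n powr (1 - l)) x) \<in> L2" by (rule wsh_L2[OF L1 one_bound])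
      show ?thesis
      proof
        fix n
        show "(diag (\<lambda>n. aw n powr l) \<circ> wsh (\<lambda>_. 1) \<circ> diag (\<lambda>n. aw n powr (1 - l))) x n = wsh (bw l) x n"
          by (cases n) (use True L1 L2' in \<open>simp_all add: diag_def wsh_Suc bw_def mult_ac\<close>)
      qed
    qed
  qed
qed

theorem mainTheorem9:
  shows "\<exists>T. is_bop T \<and> m_isometry 2 T \<and>
           (\<forall>l::real. 0 < l \<and> l < 1 \<longrightarrow>
              (\<forall>m::nat. m \<ge> 2 \<longrightarrow> \<not> m_isometry m (aluthge l T)))"
proof (intro exI conjI allI impI)
  show "is_bop (wsh aw)" by (rule is_bop_wsh[OF aw_bound])
  show "m_isometry 2 (wsh aw)" by (rule T_2iso)
  fix l :: real and m :: nat
  assume l: "0 < l \<and> l < 1" and m: "m \<ge> 2"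
  show "\<not> m_isometry m (aluthge l (wsh aw))"
    unfolding aluthgeT[OF conjunct1[OF l] conjunct2[OF l]] by (rule not_miso[OF conjunct1[OF l] conjunct2[OF l] m])
qed

end
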